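(* Let $\mu$ be a positive Borel measure on $\mathbb{C}$ of finite type, i.e. $\limsup_{r\to+\infty}\mu(D(0,r))/r<+\infty$, and let $r_0>0$. Then the quantities $$\bigl|\breve l^{\mathrm{rh}}_\mu(r,R)-l^{\mathrm{rh}}_\mu(r,R)\bigr|,\quad \bigl|\breve l^{\mathrm{lh}}_\mu(r,R)-l^{\mathrm{lh}}_\mu(r,R)\bigr|,\quad \bigl|\breve l_\mu(r,R)-l_\mu(r,R)\bigr|$$ are bounded over all $r_0\le r<R<+\infty$. Moreover, for any fixed $a\in(0,1]$ and $b\in[1,+\infty)$ the quantities $$\bigl|l^{\mathrm{rh}}_\mu(r,R)-l^{\mathrm{rh}}_\mu(ar,bR)\bigr|,\quad \bigl|l^{\mathrm{lh}}_\mu(r,R)-l^{\mathrm{lh}}_\mu(ar,bR)\bigr|,\quad \bigl|l_\mu(r,R)-l_\mu(ar,bR)\bigr|$$ are bounded over all $r_0\le r<R<+\infty$.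
   Context: $D(0,r)$ is the open disc of radius $r$ centered at $0$. For $0<r<R<+\infty$: $l^{\mathrm{rh}}_\mu(r,R):=\int_{r<|z|\le R,\ \mathrm{Re}\,z>0}\mathrm{Re}\frac1z\,d\mu(z)$, $l^{\mathrm{lh}}_\mu(r,R):=\int_{r<|z|\le R,\ \mathrm{Re}\,z<0}\mathrm{Re}(-\frac1z)\,d\mu(z)$, $l_\mu:=\max\{l^{\mathrm{lh}}_\mu,l^{\mathrm{rh}}_\mu\}$. For a $2\pi$-periodic Borel function $k\ge0$ on $\mathbb{R}$, $\mu(t;k):=\int_{|z|\le t}k(\arg z)\,d\mu(z)$; with $\cos^+\theta:=\max\{0,\cos\theta\}$, $\cos^-\theta:=\max\{0,-\cos\theta\}$, define $\breve l^{\mathrm{rh}}_\mu(r,R):=\int_r^R\frac{\mu(t;\cos^+)}{t^2}\,dt$, $\breve l^{\mathrm{lh}}_\mu(r,R):=\int_r^R\frac{\mu(t;\cos^-)}{t^2}\,dt$, $\breve l_\mu:=\max\{\breve l^{\mathrm{lh}}_\mu,\breve l^{\mathrm{rh}}_\mu\}$. *)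

theory Defs
  imports "HOL-Analysis.Analysis"
begin

definition finite_type :: "complex measure \<Rightarrow> bool" where
  "finite_type M \<longleftrightarrow>
     Limsup at_top (\<lambda>r::real. emeasure M (ball 0 r) / ennreal r) < \<infinity>"

definition l_rh :: "complex measure \<Rightarrow> real \<Rightarrow> real \<Rightarrow> real" where
  "l_rh M r R = (LINT z:{z. r < cmod z \<and> cmod z \<le> R \<and> Re z > 0}|M. Re (1 / z))"

definition l_lh :: "complex measure \<Rightarrow> real \<Rightarrow> real \<Rightarrow> real" where
  "l_lh M r R = (LINT z:{z. r < cmod z \<and> cmod z \<le> R \<and> Re z < 0}|M. Re (- (1 / z)))"

definition l_mu :: "complex measure \<Rightarrow> real \<Rightarrow> real \<Rightarrow> real" where
  "l_mu M r R = max (l_lh M r R) (l_rh M r R)"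

definition mu_k :: "complex measure \<Rightarrow> (real \<Rightarrow> real) \<Rightarrow> real \<Rightarrow> real" where
  "mu_k M k t = (LINT z:{z. cmod z \<le> t}|M. k (Arg z))"

definition cos_plus :: "real \<Rightarrow> real" where
  "cos_plus \<theta> = max 0 (cos \<theta>)"

definition cos_minus :: "real \<Rightarrow> real" where
  "cos_minus \<theta> = max 0 (- cos \<theta>)"

definition breve_l_rh :: "complex measure \<Rightarrow> real \<Rightarrow> real \<Rightarrow> real" where
  "breve_l_rh M r R = (LINT t:{r..R}|lborel. mu_k M cos_plus t / t^2)"

definition breve_l_lh :: "complex measure \<Rightarrow> real \<Rightarrow> real \<Rightarrow> real" where
  "breve_l_lh M r R = (LINT t:{r..R}|lborel. mu_k M cos_minus t / t^2)"

definition breve_l_mu :: "complex measure \<Rightarrow> real \<Rightarrow> real \<Rightarrow> real" where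
  "breve_l_mu M r R = max (breve_l_lh M r R) (breve_l_rh M r R)"

end

theory Submission
  imports Defs
begin

lemma cset: "{z::complex. cmod z \<le> t} = cball 0 t"
  by (auto simp: mem_cball_0)

lemma meas_M:
  assumes "sets M = sets (borel :: complex measure)" "g \<in> borel_measurable borel"
  shows "g \<in> borel_measurable M"
  using assms measurable_cong_sets by blast

lemma integ_bound:
  fixes M :: "complex measure" and g :: "complex \<Rightarrow> real"
  assumes borel: "sets M = sets borel" and fin: "\<And>s. emeasure M (cball 0 s) < \<infinity>"
    and gm: "g \<in> borel_measurable M" and gb: "\<And>z. \<bar>g z\<bar> \<le> c * indicator (cball 0 \<rho>) z"
  shows "integrable M g"
proof -
  have 1: "integrable M (\<lambda>z. c * indicator (cball 0 \<rho>) z :: real)"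
    using fin borel by (intro integrable_mult_right integrable_real_indicator) auto
  have 2: "g \<in> borel_measurable M" using gm .
  have 3: "AE x in M. norm (g x) \<le> norm (c * indicator (cball 0 \<rho>) x :: real)"
    using gb by (auto intro!: AE_I2 order.trans[OF _ abs_ge_self])
  show ?thesis using Bochner_Integration.integrable_bound[OF 1 2 3] .
qed

lemma sigfin:
  fixes M :: "complex measure"
  assumes borel: "sets M = sets borel" and fin: "\<And>s. emeasure M (cball 0 s) < \<infinity>"
  shows "sigma_finite_measure M"
proof
  have sp: "space M = UNIV" using sets_eq_imp_space_eq[OF borel] by simp
  show "\<exists>A. countable A \<and> A \<subseteq> sets M \<and> \<Union> A = space M \<and> (\<forall>a\<in>A. emeasure M a \<noteq> \<infinity>)"
  proof (intro exI[of _ "range (\<lambda>n::nat. cball 0 (real n))"] conjI)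
    show "\<Union> (range (\<lambda>n::nat. cball 0 (real n))) = space M"
      unfolding sp
    proof safe
      fix x :: complex
      obtain n :: nat where "norm x \<le> n" using real_arch_simple by blast
      then show "x \<in> \<Union> (range (\<lambda>n::nat. cball 0 (real n)))" by (auto simp: mem_cball_0)
    qed auto
  qed (use borel fin in \<open>auto simp: less_top[symmetric]\<close>)
qed

lemma growth:
  fixes M :: "complex measure"
  assumes borel: "sets M = sets borel" and ft: "finite_type M" and r0: "r0 > 0"
  shows "\<exists>K\<ge>0. \<forall>s\<ge>r0. emeasure M (cball 0 s) \<le> ennreal (K * s)"
proof -
  have "Limsup at_top (\<lambda>r::real. emeasure M (ball 0 r) / ennreal r) < \<infinity>"
    using ft unfolding finite_type_def .
  then obtain C where C1: "Limsup at_top (\<lambda>r::real. emeasure M (ball 0 r) / ennreal r) < C"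
    and C2: "C < \<infinity>" using dense by blast
  from Limsup_lessD[OF C1] obtain N where N: "\<And>r. r \<ge> N \<Longrightarrow> emeasure M (ball 0 r) / ennreal r < C"
    unfolding eventually_at_top_linorder by blast
  define N1 where "N1 = max N 1"
  define Kc where "Kc = enn2real C"
  have CK: "C = ennreal Kc" using C2 unfolding Kc_def by simp
  have Kc0: "Kc \<ge> 0" unfolding Kc_def by simp
  have b: "emeasure M (ball 0 r) \<le> ennreal (Kc * r)" if "r \<ge> N1" for r
  proof -
    have "r > 0" using that unfolding N1_def by simp
    have "emeasure M (ball 0 r) / ennreal r < C" using N[of r] that unfolding N1_def by simp
    then have "emeasure M (ball 0 r) < C * ennreal r"
      using \<open>r > 0\<close> by (subst (asm) divide_less_ennreal) auto
    then show ?thesis unfolding CK using \<open>r>0\<close> Kc0 by (simp add: ennreal_mult)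
  qed
  define K where "K = Kc * (2 + N1 / r0)"
  show ?thesis
  proof (intro exI[of _ K] conjI allI impI)
    show "K \<ge> 0" unfolding K_def N1_def using Kc0 r0 by simp
    fix s assume s: "s \<ge> r0"
    have "emeasure M (cball 0 s) \<le> emeasure M (ball 0 (2 * s + N1))"
      apply (rule emeasure_mono)
      using s r0 borel by (auto simp: N1_def subset_eq) 
    also have "\<dots> \<le> ennreal (Kc * (2 * s+N1))"
      using s r0 by (intro b) (auto simp: N1_def)
    also have "\<dots> \<le> ennreal (K * s)"
    proof (rule ennreal_leI)
      have "1 \<le> s / r0" using s r0 by simp
      then have "N1 * 1 \<le> N1 * (s / r0)" by (intro mult_left_mono) (auto simp: N1_def)
      then have "N1 \<le> N1 / r0 * s" by simp
      then show "Kc * (2 * s+N1) \<le> K * s"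
        unfolding K_def using Kc0 mult_left_mono[OF \<open>N1 \<le> N1 / r0 * s\<close> Kc0]
        by (simp add: algebra_simps)
    qed
    finally show "emeasure M (cball 0 s) \<le> ennreal (K * s)" .
  qed
qed

lemma inv_sq_integral:
  fixes m R a :: real
  assumes "0 < m" "m \<le> R"
  shows "((\<lambda>t. a / t^2) has_integral (a * (1/m - 1/R))) {m..R}"
proof -
  have "((\<lambda>t. a / t^2) has_integral ((\<lambda>t. - a / t) R - (\<lambda>t. - a / t) m)) {m..R}"
  proof (rule fundamental_theorem_of_calculus[OF assms(2)])
    fix x assume x: "x \<in> {m..R}"
    then have "x \<noteq> 0" using assms by auto
    have "((\<lambda>t. - a / t) has_real_derivative (a / x^2)) (at x within {m..R})"
      using \<open>x \<noteq> 0\<close> by (auto intro!: derivative_eq_intros simp: power2_eq_square field_simps)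
    then show "((\<lambda>t. - a / t) has_vector_derivative (a / x^2)) (at x within {m..R})"
      by (simp add: has_real_derivative_iff_has_vector_derivative)
  qed
  then show ?thesis by (simp add: algebra_simps)
qed

lemma key:
  fixes M :: "complex measure" and f :: "complex \<Rightarrow> real"
  assumes borel: "sets M = sets borel" and fin: "\<And>s. emeasure M (cball 0 s) < \<infinity>"
    and fm: "f \<in> borel_measurable borel" and f0: "\<And>z. 0 \<le> f z" and f1: "\<And>z. f z \<le> 1"
    and r: "0 < r" "r \<le> R"
  shows "(LINT t:{r..R}|lborel. (LINT z:{z. cmod z \<le> t}|M. f z) / t^2)
       - (LINT z:{z. r < cmod z \<and> cmod z \<le> R}|M. f z / cmod z)
       = (LINT z:{z. cmod z \<le> r}|M. f z) / r - (LINT z:{z. cmod z \<le> R}|M. f z) / R"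
proof -
  have fM[measurable]: "f \<in> borel_measurable M" using meas_M[OF borel fm] .
  have idM[measurable]: "(\<lambda>z. z) \<in> measurable M borel" using measurable_ident_sets[OF borel] .
  have cb[measurable]: "cball 0 t \<in> sets M" for t using borel by simp
  define h where "h t = (LINT z:{z. cmod z \<le> t}|M. f z)" for t
  have h_eq: "h t = integral\<^sup>L M (\<lambda>z. indicator (cball 0 t) z * f z)" for t
    unfolding h_def set_lebesgue_integral_def cset by simp
  have hI: "integrable M (\<lambda>z. indicator (cball 0 t) z * f z)" for t
    by (rule integ_bound[OF borel fin, of _ 1 t]) (use f0 f1 in \<open>measurable, auto simp: indicator_def\<close>)
  have h0: "0 \<le> h t" for t unfolding h_eq using f0 by (intro Bochner_Integration.integral_nonneg) auto
  have hmono: "mono h"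
    unfolding mono_def h_eq
  proof (intro allI impI integral_mono hI)
    fix x y :: real and z assume "x \<le> y"
    then show "indicator (cball 0 x) z * f z \<le> indicator (cball 0 y) z * f z"
      using f0[of z] by (auto simp: indicator_def mem_cball_0)
  qed
  have hm[measurable]: "h \<in> borel_measurable borel" using borel_measurable_mono[OF hmono] .
  define F where "F z t = ennreal (if r \<le> t \<and> t \<le> R \<and> cmod z \<le> t then f z / t^2 else 0)" for z t
  define c where "c z = (if cmod z \<le> R then 1 / max r (cmod z) - 1 / R else 0)" for z :: complex
  have c0: "0 \<le> c z" for z using r by (auto simp: c_def field_simps)
  have c1: "c z \<le> 1 / r" for z
  proof -
    have "1 / max r (cmod z) \<le> 1 / r" using r by (intro divide_left_mono) auto
    moreover have "0 < 1 / R" using r by simp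
    ultimately have "1 / max r (cmod z) - 1 / R \<le> 1 / r" by linarith
    moreover have "0 \<le> 1 / r" using r by simp
    ultimately show ?thesis unfolding c_def by simp
  qed
  have cm[measurable]: "c \<in> borel_measurable M" unfolding c_def by measurable
  have fcI: "integrable M (\<lambda>z. f z * c z)"
    apply (rule integ_bound[OF borel fin, of _ "1/r" R])
    subgoal by measurable
    subgoal for z
    proof -
      have "f z * c z \<le> 1 * (1/r)" by (rule mult_mono) (use f1 c1 c0 in auto)
      moreover have "c z = 0" if "cmod z > R" using that by (simp add: c_def)
      ultimately show ?thesis using f0[of z] c0[of z] by (auto simp: indicator_def mem_cball_0)
    qed
    done
  have step1: "(LINT t:{r..R}|lborel. h t / t^2)
      = enn2real (\<integral>\<^sup>+ t. ennreal (indicator {r..R} t * (h t / t^2)) \<partial>lborel)"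
    unfolding set_lebesgue_integral_def
    by (subst integral_eq_nn_integral) (auto intro!: AE_I2 simp: h0)
  have step2: "ennreal (indicator {r..R} t * (h t / t^2)) = (\<integral>\<^sup>+ z. F z t \<partial>M)" for t
  proof -
    have "indicator {r..R} t * (h t / t^2)
       = integral\<^sup>L M (\<lambda>z. (indicator {r..R} t / t^2) * (indicator (cball 0 t) z * f z))"
      unfolding h_eq by simp
    also have "ennreal \<dots> = (\<integral>\<^sup>+ z. ennreal ((indicator {r..R} t / t^2) * (indicator (cball 0 t) z * f z)) \<partial>M)"
      by (rule nn_integral_eq_integral[symmetric]) (auto intro!: hI AE_I2 simp: f0)
    also have "\<dots> = (\<integral>\<^sup>+ z. F z t \<partial>M)"
      by (rule nn_integral_cong) (auto simp: F_def indicator_def mem_cball_0)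
    finally show ?thesis .
  qed
  interpret pair_sigma_finite M lborel
    by (intro pair_sigma_finite.intro sigfin[OF borel fin] sigma_finite_lborel)
  have Fm: "case_prod F \<in> borel_measurable (M \<Otimes>\<^sub>M lborel)"
    unfolding F_def by measurable
  have step3: "(\<integral>\<^sup>+ t. (\<integral>\<^sup>+ z. F z t \<partial>M) \<partial>lborel) = (\<integral>\<^sup>+ z. (\<integral>\<^sup>+ t. F z t \<partial>lborel) \<partial>M)"
    using Fubini'[OF Fm] .
  have step4: "(\<integral>\<^sup>+ t. F z t \<partial>lborel) = ennreal (f z * c z)" for z
  proof (cases "cmod z \<le> R")
    case True
    define m where "m = max r (cmod z)"
    have m: "0 < m" "m \<le> R" using True r by (auto simp: m_def)
    have "(\<integral>\<^sup>+ t. F z t \<partial>lborel) = (\<integral>\<^sup>+ t. ennreal (indicator {m..R} t * (f z / t^2)) \<partial>lborel)"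
      by (rule nn_integral_cong) (auto simp: F_def m_def indicator_def)
    also have "\<dots> = ennreal (f z * (1/m - 1/R))"
      by (rule nn_integral_has_integral_lebesgue[OF _ inv_sq_integral[OF m]]) (simp add: f0)
    finally show ?thesis using True by (simp add: c_def m_def)
  next
    case False
    have "F z = (\<lambda>t. 0)" using False by (auto simp: F_def fun_eq_iff)
    then show ?thesis using False by (simp add: c_def)
  qed
  have step5: "(\<integral>\<^sup>+ z. ennreal (f z * c z) \<partial>M) = ennreal (integral\<^sup>L M (\<lambda>z. f z * c z))"
    by (rule nn_integral_eq_integral) (auto intro!: fcI AE_I2 simp: f0 c0)
  have breve: "(LINT t:{r..R}|lborel. h t / t^2) = integral\<^sup>L M (\<lambda>z. f z * c z)"
    unfolding step1 step2 step3 step4 step5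
    using f0 c0 by (simp add: Bochner_Integration.integral_nonneg)
  define A where "A = {z. r < cmod z \<and> cmod z \<le> R}"
  have Am[measurable]: "A \<in> sets M" unfolding A_def using borel by simp
  have lI: "integrable M (\<lambda>z. indicator A z * (f z / cmod z))"
    apply (rule integ_bound[OF borel fin, of _ "1/r" R])
    subgoal by measurable
    subgoal for z
    proof (cases "z \<in> A")
      case True
      then have z: "r < cmod z" "cmod z \<le> R" by (auto simp: A_def)
      have "f z / cmod z \<le> 1 / r"
        using z r f0[of z] f1[of z] by (intro frac_le) auto
      then show ?thesis using True z f0[of z] by (auto simp: indicator_def A_def mem_cball_0)
    qed (use r in \<open>simp add: indicator_def\<close>)
    done
  have "(LINT t:{r..R}|lborel. h t / t^2) - (LINT z:A|M. f z / cmod z)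
      = integral\<^sup>L M (\<lambda>z. f z * c z) - integral\<^sup>L M (\<lambda>z. indicator A z * (f z / cmod z))"
    unfolding breve by (simp add: set_lebesgue_integral_def)
  also have "\<dots> = integral\<^sup>L M (\<lambda>z. f z * c z - indicator A z * (f z / cmod z))"
    by (rule Bochner_Integration.integral_diff[symmetric, OF fcI lI])
  also have "\<dots> = integral\<^sup>L M (\<lambda>z. indicator (cball 0 r) z * f z / r - indicator (cball 0 R) z * f z / R)"
  proof (rule Bochner_Integration.integral_cong[OF refl])
    fix z :: complex
    show "f z * c z - indicator A z * (f z / cmod z) = indicator (cball 0 r) z * f z / r - indicator (cball 0 R) z * f z / R"
      using r by (auto simp: c_def A_def indicator_def mem_cball_0 max_def field_simps)
  qed
  also have "\<dots> = h r / r - h R / R"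
    unfolding h_eq using hI by (simp add: Bochner_Integration.integral_diff)
  finally show ?thesis unfolding h_def A_def .
qed

lemma int_bound:
  fixes M :: "complex measure" and f :: "complex \<Rightarrow> real"
  assumes borel: "sets M = sets borel" and fin: "\<And>s. emeasure M (cball 0 s) < \<infinity>"
    and fm: "f \<in> borel_measurable borel" and f0: "\<And>z. 0 \<le> f z" and f1: "\<And>z. f z \<le> 1"
  shows "0 \<le> (LINT z:{z. cmod z \<le> s}|M. f z) \<and> (LINT z:{z. cmod z \<le> s}|M. f z) \<le> measure M (cball 0 s)"
proof -
  have fM[measurable]: "f \<in> borel_measurable M" using meas_M[OF borel fm] .
  have cb[measurable]: "cball 0 t \<in> sets M" for t using borel by simp
  have sp: "space M = UNIV" using sets_eq_imp_space_eq[OF borel] by simp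
  have hI: "integrable M (\<lambda>z. indicator (cball 0 t) z * f z)" for t
    by (rule integ_bound[OF borel fin, of _ 1 t]) (use f0 f1 in \<open>measurable, auto simp: indicator_def\<close>)
  have "(LINT z:{z. cmod z \<le> s}|M. f z) = integral\<^sup>L M (\<lambda>z. indicator (cball 0 s) z * f z)"
    unfolding set_lebesgue_integral_def cset by simp
  moreover have "0 \<le> integral\<^sup>L M (\<lambda>z. indicator (cball 0 s) z * f z)"
    using f0 by (intro Bochner_Integration.integral_nonneg) auto
  moreover have "integral\<^sup>L M (\<lambda>z. indicator (cball 0 s) z * f z) \<le> integral\<^sup>L M (indicator (cball 0 s))"
    using fin[of s] f1 by (intro Bochner_Integration.integral_mono hI) (auto simp: indicator_def)
  ultimately show ?thesis by (simp add: sp)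
qed

lemma part1:
  fixes M :: "complex measure" and f :: "complex \<Rightarrow> real"
  assumes borel: "sets M = sets borel" and fin: "\<And>s. emeasure M (cball 0 s) < \<infinity>"
    and K: "\<And>s. s \<ge> r0 \<Longrightarrow> measure M (cball 0 s) \<le> K * s"
    and fm: "f \<in> borel_measurable borel" and f0: "\<And>z. 0 \<le> f z" and f1: "\<And>z. f z \<le> 1"
    and r: "0 < r0" "r0 \<le> r" "r < R"
  shows "\<bar>(LINT t:{r..R}|lborel. (LINT z:{z. cmod z \<le> t}|M. f z) / t^2)
       - (LINT z:{z. r < cmod z \<and> cmod z \<le> R}|M. f z / cmod z)\<bar> \<le> K"
proof -
  have b: "0 \<le> (LINT z:{z. cmod z \<le> s}|M. f z) / s \<and> (LINT z:{z. cmod z \<le> s}|M. f z) / s \<le> K"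
    if "s \<ge> r0" for s
  proof -
    have s: "s > 0" using that r by simp
    note ib = int_bound[OF borel fin fm f0 f1, of s]
    have "(LINT z:{z. cmod z \<le> s}|M. f z) \<le> K * s" using ib K[OF that] by linarith
    then show ?thesis using ib s by (simp add: field_simps)
  qed
  show ?thesis
    apply (subst key[OF borel fin fm f0 f1, of r R])
    using b[of r] b[of R] r by auto
qed

lemma lgen_integrable:
  fixes M :: "complex measure" and f :: "complex \<Rightarrow> real"
  assumes borel: "sets M = sets borel" and fin: "\<And>s. emeasure M (cball 0 s) < \<infinity>"
    and fm: "f \<in> borel_measurable borel" and f0: "\<And>z. 0 \<le> f z" and f1: "\<And>z. f z \<le> 1"
    and r: "0 < r"
  shows "integrable M (\<lambda>z. indicator {z. r < cmod z \<and> cmod z \<le> R} z * (f z / cmod z))"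
proof -
  have fM[measurable]: "f \<in> borel_measurable M" using meas_M[OF borel fm] .
  have idM[measurable]: "(\<lambda>z. z) \<in> measurable M borel" using measurable_ident_sets[OF borel] .
  define A where "A = {z. r < cmod z \<and> cmod z \<le> R}"
  have Am[measurable]: "A \<in> sets M" unfolding A_def using borel by simp
  have "integrable M (\<lambda>z. indicator A z * (f z / cmod z))"
    apply (rule integ_bound[OF borel fin, of _ "1/r" R])
    subgoal by measurable
    subgoal for z
    proof (cases "z \<in> A")
      case True
      then have z: "r < cmod z" "cmod z \<le> R" by (auto simp: A_def)
      have "f z / cmod z \<le> 1 / r"
        using z r f0[of z] f1[of z] by (intro frac_le) auto
      then show ?thesis using True z f0[of z] by (auto simp: indicator_def A_def mem_cball_0)
    qed (use r in \<open>simp add: indicator_def\<close>)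
    done
  then show ?thesis unfolding A_def .
qed

lemma part4:
  fixes M :: "complex measure" and f :: "complex \<Rightarrow> real"
  assumes borel: "sets M = sets borel" and fin: "\<And>s. emeasure M (cball 0 s) < \<infinity>"
    and K: "\<And>s. s \<ge> r0 \<Longrightarrow> measure M (cball 0 s) \<le> K * s"
    and fm: "f \<in> borel_measurable borel" and f0: "\<And>z. 0 \<le> f z" and f1: "\<And>z. f z \<le> 1"
    and r: "0 < r0" "r0 \<le> r" "r < R" and ab: "0 < a" "a \<le> 1" "1 \<le> b"
  shows "\<bar>(LINT z:{z. r < cmod z \<and> cmod z \<le> R}|M. f z / cmod z)
       - (LINT z:{z. a * r < cmod z \<and> cmod z \<le> b * R}|M. f z / cmod z)\<bar> \<le> K / a + K * b"
proof -
  have fM[measurable]: "f \<in> borel_measurable M" using meas_M[OF borel fm] .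
  have idM[measurable]: "(\<lambda>z. z) \<in> measurable M borel" using measurable_ident_sets[OF borel] .
  have sp: "space M = UNIV" using sets_eq_imp_space_eq[OF borel] by simp
  define A where "A = {z. r < cmod z \<and> cmod z \<le> R}"
  define B where "B = {z. a * r < cmod z \<and> cmod z \<le> b * R}"
  have ar: "0 < a * r" "a * r \<le> r" using ab r by (auto simp: mult_left_le_one_le)
  have bR: "R \<le> b * R" using ab r by simp
  have AI: "integrable M (\<lambda>z. indicator A z * (f z / cmod z))"
    unfolding A_def using r by (intro lgen_integrable[OF borel fin fm f0 f1]) auto
  have BI: "integrable M (\<lambda>z. indicator B z * (f z / cmod z))"
    unfolding B_def using ar by (intro lgen_integrable[OF borel fin fm f0 f1]) auto
  define g where "g z = indicator B z * (f z / cmod z) - indicator A z * (f z / cmod z)" for z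
  have gI: "integrable M g" unfolding g_def using AI BI by simp
  have AB: "A \<subseteq> B" unfolding A_def B_def using ar(2) bR by (smt (verit) mem_Collect_eq subsetI)
  have g0: "0 \<le> g z" for z
  proof -
    have "0 \<le> f z / cmod z" using f0[of z] by simp
    then show ?thesis by (cases "z \<in> A"; cases "z \<in> B") (use AB in \<open>auto simp: g_def\<close>)
  qed
  have g1: "g z \<le> indicator (cball 0 r) z / (a * r) + indicator (cball 0 (b * R)) z / R" for z
  proof -
    have iR: "0 \<le> 1 / R" and iar: "0 \<le> 1 / (a * r)" using r ar by auto
    consider "a * r < cmod z \<and> cmod z \<le> r" | "R < cmod z \<and> cmod z \<le> b * R" | "g z = 0"
    proof -
      have "g z = 0" if "\<not> (a * r < cmod z \<and> cmod z \<le> r)" "\<not> (R < cmod z \<and> cmod z \<le> b * R)"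
        using that AB unfolding g_def by (cases "z \<in> A"; cases "z \<in> B") (auto simp: A_def B_def)
      then show ?thesis using that by blast
    qed
    then show ?thesis
    proof cases
      case 1
      have "cmod z \<le> b * R" using 1 r(3) bR by linarith
      then have "z \<in> B" "z \<notin> A" using 1 unfolding A_def B_def by auto
      then have "g z = f z / cmod z" unfolding g_def by simp
      also have "\<dots> \<le> 1 / (a * r)" using 1 ar f0[of z] f1[of z] by (intro frac_le) auto
      finally have "g z \<le> 1 / (a * r) + 1 / R" using iR by linarith
      moreover have "z \<in> cball 0 r" "z \<in> cball 0 (b * R)" using 1 \<open>cmod z \<le> b * R\<close> by (auto simp: mem_cball_0)
      ultimately show ?thesis by simp
    next
      case 2
      have "a * r < cmod z" using 2 ar(2) r(3) by linarith
      then have "z \<in> B" "z \<notin> A" using 2 unfolding A_def B_def by auto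
      then have "g z = f z / cmod z" unfolding g_def by simp
      also have "\<dots> \<le> 1 / R" using 2 r f0[of z] f1[of z] by (intro frac_le) auto
      finally have "g z \<le> 1 / R" .
      moreover have "z \<in> cball 0 (b * R)" "z \<notin> cball 0 r" using 2 r by (auto simp: mem_cball_0)
      ultimately show ?thesis by simp
    next
      case 3
      then show ?thesis using r ar by (auto simp: indicator_def)
    qed
  qed
  have cI: "integrable M (\<lambda>z. indicator (cball 0 r) z / (a * r) + indicator (cball 0 (b * R)) z / R :: real)"
    using fin borel by (intro Bochner_Integration.integrable_add integrable_divide integrable_real_indicator) auto
  have "integral\<^sup>L M g \<le> integral\<^sup>L M (\<lambda>z. indicator (cball 0 r) z / (a * r) + indicator (cball 0 (b * R)) z / R :: real)"
    by (intro Bochner_Integration.integral_mono gI cI g1)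
  also have "\<dots> = measure M (cball 0 r) / (a * r) + measure M (cball 0 (b * R)) / R"
    using fin borel by (subst Bochner_Integration.integral_add) (auto simp: sp)
  also have "\<dots> \<le> K * r / (a * r) + K * (b * R) / R"
    using K[of r] K[of "b * R"] r ar bR by (intro add_mono divide_right_mono) auto
  also have "\<dots> = K / a + K * b" using r ar by (simp add: field_simps)
  finally have gb: "integral\<^sup>L M g \<le> K / a + K * b" .
  have "(LINT z:B|M. f z / cmod z) - (LINT z:A|M. f z / cmod z) = integral\<^sup>L M g"
    unfolding set_lebesgue_integral_def g_def
    using Bochner_Integration.integral_diff[OF BI AI] by simp
  moreover have "0 \<le> integral\<^sup>L M g" using g0 by (intro Bochner_Integration.integral_nonneg) auto
  ultimately show ?thesis using gb unfolding A_def B_def by linarith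
qed

lemma max_diff_le: "\<bar>max (a::real) b - max c d\<bar> \<le> C" if "\<bar>a - c\<bar> \<le> C" "\<bar>b - d\<bar> \<le> C"
  using that by (auto simp: max_def abs_if split: if_splits)

lemma Re_inv: "Re (1 / z) = Re z / (cmod z)^2"
  by (simp add: Re_divide cmod_power2)

lemma cos_Arg: "z \<noteq> 0 \<Longrightarrow> cos (Arg z) = Re z / cmod z"
proof -
  assume "z \<noteq> 0"
  then have "Re (cis (Arg z)) = Re (sgn z)" using cis_Arg by simp
  then show ?thesis by simp
qed

theorem proposition3:
  fixes M :: "complex measure" and r0 :: real
  assumes borel: "sets M = sets borel"
    and ft: "finite_type M"
    and r0: "r0 > 0"
  shows "(\<exists>C. \<forall>r R. r0 \<le> r \<and> r < R \<longrightarrow> \<bar>breve_l_rh M r R - l_rh M r R\<bar> \<le> C)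
       \<and> (\<exists>C. \<forall>r R. r0 \<le> r \<and> r < R \<longrightarrow> \<bar>breve_l_lh M r R - l_lh M r R\<bar> \<le> C)
       \<and> (\<exists>C. \<forall>r R. r0 \<le> r \<and> r < R \<longrightarrow> \<bar>breve_l_mu M r R - l_mu M r R\<bar> \<le> C)
       \<and> (\<forall>a b. 0 < a \<and> a \<le> 1 \<and> 1 \<le> b \<longrightarrow>
            (\<exists>C. \<forall>r R. r0 \<le> r \<and> r < R \<longrightarrow> \<bar>l_rh M r R - l_rh M (a * r) (b * R)\<bar> \<le> C)
          \<and> (\<exists>C. \<forall>r R. r0 \<le> r \<and> r < R \<longrightarrow> \<bar>l_lh M r R - l_lh M (a * r) (b * R)\<bar> \<le> C)
          \<and> (\<exists>C. \<forall>r R. r0 \<le> r \<and> r < R \<longrightarrow> \<bar>l_mu M r R - l_mu M (a * r) (b * R)\<bar> \<le> C))"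
proof -
  obtain K where K0: "K \<ge> 0" and KE: "\<And>s. s \<ge> r0 \<Longrightarrow> emeasure M (cball 0 s) \<le> ennreal (K * s)"
    using growth[OF borel ft r0] by blast
  have fin: "emeasure M (cball 0 s) < \<infinity>" for s
  proof -
    have "emeasure M (cball 0 s) \<le> emeasure M (cball 0 (max s r0))"
      using borel by (intro emeasure_mono) auto
    also have "\<dots> \<le> ennreal (K * max s r0)" by (intro KE) simp
    finally show ?thesis by (rule le_less_trans) simp
  qed
  have Km: "measure M (cball 0 s) \<le> K * s" if "s \<ge> r0" for s
  proof -
    have "ennreal (measure M (cball 0 s)) \<le> ennreal (K * s)"
      using KE[OF that] fin[of s] by (simp add: emeasure_eq_ennreal_measure)
    then show ?thesis using that r0 K0 by (simp add: ennreal_le_iff)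
  qed
  define fp where "fp z = (if z = 0 then 1 else max 0 (Re z / cmod z))" for z :: complex
  define fm where "fm z = max 0 (- Re z / cmod z)" for z :: complex
  have fpm: "fp \<in> borel_measurable borel" unfolding fp_def by measurable
  have fmm: "fm \<in> borel_measurable borel" unfolding fm_def by measurable
  have fp0: "0 \<le> fp z" for z by (simp add: fp_def)
  have fm0: "0 \<le> fm z" for z by (simp add: fm_def)
  have ra: "\<bar>Re z / cmod z\<bar> \<le> 1" for z
    by (cases "z = 0") (auto simp: abs_Re_le_cmod divide_le_eq_1 abs_divide)
  have fp1: "fp z \<le> 1" for z
    using ra[of z] by (auto simp: fp_def abs_le_iff)
  have fm1: "fm z \<le> 1" for z
  proof -
    have "- (Re z / cmod z) \<le> 1" using abs_le_D2[OF ra[of z]] .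
    then have "- Re z / cmod z \<le> 1" by (simp only: minus_divide_left)
    then show ?thesis unfolding fm_def by simp
  qed
  have fp_eq: "cos_plus (Arg z) = fp z" for z
    by (cases "z = 0") (auto simp: cos_plus_def fp_def Arg_zero cos_Arg)
  have fm_eq: "cos_minus (Arg z) = fm z" for z
    by (cases "z = 0") (auto simp: cos_minus_def fm_def Arg_zero cos_Arg)
  have brh: "breve_l_rh M r R = (LINT t:{r..R}|lborel. (LINT z:{z. cmod z \<le> t}|M. fp z) / t^2)" for r R
    unfolding breve_l_rh_def mu_k_def fp_eq ..
  have blh: "breve_l_lh M r R = (LINT t:{r..R}|lborel. (LINT z:{z. cmod z \<le> t}|M. fm z) / t^2)" for r R
    unfolding breve_l_lh_def mu_k_def fm_eq ..
  have lrh: "l_rh M r R = (LINT z:{z. r < cmod z \<and> cmod z \<le> R}|M. fp z / cmod z)" if "0 \<le> r" for r R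
    unfolding l_rh_def set_lebesgue_integral_def
  proof (rule Bochner_Integration.integral_cong[OF refl])
    fix z
    show "indicator {z. r < cmod z \<and> cmod z \<le> R \<and> 0 < Re z} z *\<^sub>R Re (1 / z) =
          indicator {z. r < cmod z \<and> cmod z \<le> R} z *\<^sub>R (fp z / cmod z)"
    proof (cases "r < cmod z \<and> cmod z \<le> R")
      case True
      then have "z \<noteq> 0" using that by auto
      have q: "Re z \<le> 0 \<Longrightarrow> max 0 (Re z / cmod z) = 0" by (simp add: divide_nonpos_nonneg)
      then show ?thesis using True \<open>z \<noteq> 0\<close>
        by (auto simp: indicator_def fp_def Re_inv power2_eq_square)
    qed (auto simp: indicator_def)
  qed
  have llh: "l_lh M r R = (LINT z:{z. r < cmod z \<and> cmod z \<le> R}|M. fm z / cmod z)" if "0 \<le> r" for r R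
    unfolding l_lh_def set_lebesgue_integral_def
  proof (rule Bochner_Integration.integral_cong[OF refl])
    fix z
    show "indicator {z. r < cmod z \<and> cmod z \<le> R \<and> Re z < 0} z *\<^sub>R Re (- (1 / z)) =
          indicator {z. r < cmod z \<and> cmod z \<le> R} z *\<^sub>R (fm z / cmod z)"
    proof (cases "r < cmod z \<and> cmod z \<le> R")
      case True
      then have "z \<noteq> 0" using that by auto
      have q: "0 \<le> Re z \<Longrightarrow> fm z = 0" unfolding fm_def by (simp add: divide_nonpos_nonneg)
      have q2: "Re z < 0 \<Longrightarrow> fm z = - (Re z / cmod z)"
        unfolding fm_def using divide_neg_pos[of "Re z" "cmod z"] \<open>z \<noteq> 0\<close> by (simp add: max_def)
      show ?thesis using True \<open>z \<noteq> 0\<close> q q2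
        by (auto simp: indicator_def Re_inv power2_eq_square)
    qed (auto simp: indicator_def)
  qed
  have P1: "\<bar>breve_l_rh M r R - l_rh M r R\<bar> \<le> K" "\<bar>breve_l_lh M r R - l_lh M r R\<bar> \<le> K"
    if "r0 \<le> r" "r < R" for r R
    using that r0
    by (simp_all add: brh blh lrh llh part1[OF borel fin Km fpm fp0 fp1] part1[OF borel fin Km fmm fm0 fm1])
  have P4: "\<bar>l_rh M r R - l_rh M (a * r) (b * R)\<bar> \<le> K / a + K * b"
           "\<bar>l_lh M r R - l_lh M (a * r) (b * R)\<bar> \<le> K / a + K * b"
    if "r0 \<le> r" "r < R" "0 < a" "a \<le> 1" "1 \<le> b" for r R a b
  proof -
    have "0 \<le> r" "0 \<le> a * r" using that r0 by auto
    then show "\<bar>l_rh M r R - l_rh M (a * r) (b * R)\<bar> \<le> K / a + K * b"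
              "\<bar>l_lh M r R - l_lh M (a * r) (b * R)\<bar> \<le> K / a + K * b"
      using that r0
      by (simp_all add: lrh llh part4[OF borel fin Km fpm fp0 fp1] part4[OF borel fin Km fmm fm0 fm1])
  qed
  have P3: "\<bar>breve_l_mu M r R - l_mu M r R\<bar> \<le> K" if "r0 \<le> r" "r < R" for r R
    unfolding breve_l_mu_def l_mu_def using P1[OF that] by (intro max_diff_le)
  have P5: "\<bar>l_mu M r R - l_mu M (a * r) (b * R)\<bar> \<le> K / a + K * b"
    if "r0 \<le> r" "r < R" "0 < a" "a \<le> 1" "1 \<le> b" for r R a b
    unfolding l_mu_def using P4[OF that] by (intro max_diff_le)
  show ?thesis
  proof (intro conjI allI impI)
    show "\<exists>C. \<forall>r R. r0 \<le> r \<and> r < R \<longrightarrow> \<bar>breve_l_rh M r R - l_rh M r R\<bar> \<le> C"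
      using P1(1) by blast
    show "\<exists>C. \<forall>r R. r0 \<le> r \<and> r < R \<longrightarrow> \<bar>breve_l_lh M r R - l_lh M r R\<bar> \<le> C"
      using P1(2) by blast
    show "\<exists>C. \<forall>r R. r0 \<le> r \<and> r < R \<longrightarrow> \<bar>breve_l_mu M r R - l_mu M r R\<bar> \<le> C"
      using P3 by blast
    fix a b :: real assume ab: "0 < a \<and> a \<le> 1 \<and> 1 \<le> b"
    show "\<exists>C. \<forall>r R. r0 \<le> r \<and> r < R \<longrightarrow> \<bar>l_rh M r R - l_rh M (a * r) (b * R)\<bar> \<le> C"
      using P4(1) ab by blast
    show "\<exists>C. \<forall>r R. r0 \<le> r \<and> r < R \<longrightarrow> \<bar>l_lh M r R - l_lh M (a * r) (b * R)\<bar> \<le> C"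
      using P4(2) ab by blast
    show "\<exists>C. \<forall>r R. r0 \<le> r \<and> r < R \<longrightarrow> \<bar>l_mu M r R - l_mu M (a * r) (b * R)\<bar> \<le> C"
      using P5 ab by blast
  qed
qed

end
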